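(* Let $\Omega\subset\mathbb{R}^n$ be a bounded open set, $K\subset\Omega$ a non-empty compact set, and $\lambda>0$. Let $f(x)=\mathrm{dist}^2(x,K\cup\Omega^c)$ and let $f^{-}_{\overline\Omega}:\overline\Omega\to\mathbb{R}$ equal $f$ on $\Omega$ and $\inf_\Omega f$ on $\partial\Omega$. Then for every $x\in\overline\Omega$, $$\mathcal{M}(\lambda;K\cup\Omega^c)(x)=(1+\lambda)\Big(f^{-}_{\overline\Omega}(x)-C^l_{\lambda,\Omega}(f^{-}_{\overline\Omega})(x)\Big).$$
   Context: $\Omega^c=\mathbb{R}^n\setminus\Omega$; $\mathrm{dist}(x,A)=\inf_{y\in A}|x-y|$. For a nonempty closed set $F$, the quadratic multiscale medial axis map is $\mathcal{M}(\lambda;F)(x)=(1+\lambda)\big(\mathrm{dist}^2(x;F)-C^l_\lambda(\mathrm{dist}^2(\cdot;F))(x)\big)$ for $x\in\mathbb{R}^n$, where $C^l_\lambda(g)(x)=\mathrm{co}[g+\lambda|\cdot|^2](x)-\lambda|x|^2$ and $\mathrm{co}$ is the convex envelope. For bounded $g:\overline\Omega\to\mathbb{R}$ and $x\in\overline\Omega$: $M_{\lambda,\Omega}(g)(x)=\inf_{y\in\overline\Omega}\{g(y)+\lambda|y-x|^2\}$, $M^{\lambda}_{\Omega}(g)(x)=\sup_{y\in\overline\Omega}\{g(y)-\lambda|y-x|^2\}$, and $C^l_{\lambda,\Omega}(g)(x)=M^{\lambda}_{\Omega}(M_{\lambda,\Omega}(g))(x)$. *)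

theory Defs
  imports "HOL-Analysis.Analysis"
begin

definition convex_envelope :: "('a::euclidean_space \<Rightarrow> real) \<Rightarrow> 'a \<Rightarrow> real" where
  "convex_envelope g x = Sup {h x | h. convex_on UNIV h \<and> (\<forall>y. h y \<le> g y)}"

definition lower_transform :: "real \<Rightarrow> ('a::euclidean_space \<Rightarrow> real) \<Rightarrow> 'a \<Rightarrow> real" where
  "lower_transform l g x = convex_envelope (\<lambda>y. g y + l * (norm y)\<^sup>2) x - l * (norm x)\<^sup>2"

definition medial_axis_map :: "real \<Rightarrow> 'a::euclidean_space set \<Rightarrow> 'a \<Rightarrow> real" where
  "medial_axis_map l F x =
     (1 + l) * ((infdist x F)\<^sup>2 - lower_transform l (\<lambda>y. (infdist y F)\<^sup>2) x)"

definition moreau_lower :: "real \<Rightarrow> 'a::euclidean_space set \<Rightarrow> ('a \<Rightarrow> real) \<Rightarrow> 'a \<Rightarrow> real" where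
  "moreau_lower l \<Omega> g x = (INF y\<in>closure \<Omega>. g y + l * (norm (y - x))\<^sup>2)"

definition moreau_upper :: "real \<Rightarrow> 'a::euclidean_space set \<Rightarrow> ('a \<Rightarrow> real) \<Rightarrow> 'a \<Rightarrow> real" where
  "moreau_upper l \<Omega> g x = (SUP y\<in>closure \<Omega>. g y - l * (norm (y - x))\<^sup>2)"

definition lower_transform_on :: "real \<Rightarrow> 'a::euclidean_space set \<Rightarrow> ('a \<Rightarrow> real) \<Rightarrow> 'a \<Rightarrow> real" where
  "lower_transform_on l \<Omega> g x = moreau_upper l \<Omega> (moreau_lower l \<Omega> g) x"

end

theory Submission
  imports Defs
begin

lemma subgrad:
  fixes h :: "'a::euclidean_space \<Rightarrow> real"
  assumes hc: "convex_on UNIV h"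
  shows "\<exists>p. \<forall>z. h x + inner p (z - x) \<le> h z"
proof -
  define S where "S = {(z,t::real). h z < t}"
  have cS: "convex S"
    unfolding convex_def S_def
  proof (clarsimp)
    fix z1 t1 z2 t2 and u v :: real
    assume a: "h z1 < t1" "h z2 < t2" "0 \<le> u" "0 \<le> v" "u + v = 1"
    have "h (u *\<^sub>R z1 + v *\<^sub>R z2) \<le> u * h z1 + v * h z2"
      using hc a unfolding convex_on_def by auto
    also have "\<dots> < u * t1 + v * t2"
    proof (cases "u = 0")
      case True then show ?thesis using a by simp
    next
      case False then have "u > 0" using a by simp
      then have "u * h z1 < u * t1" using a by simp
      moreover have "v * h z2 \<le> v * t2" using a by (simp add: mult_left_mono)
      ultimately show ?thesis by linarith
    qed
    finally show "h (u *\<^sub>R z1 + v *\<^sub>R z2) < u * t1 + v * t2" .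
  qed
  have "S \<inter> {(x, h x)} = {}" by (auto simp: S_def)
  moreover have "(x, h x + 1) \<in> S" by (simp add: S_def)
  then have "S \<noteq> {}" by blast
  ultimately obtain a b where ab: "a \<noteq> 0" "\<forall>y\<in>S. inner a y \<le> b" "\<forall>y\<in>{(x, h x)}. inner a y \<ge> b"
    using separating_hyperplane_sets[OF cS convex_singleton] by blast
  obtain a1 a0 where a: "a = (a1, a0)" by (cases a)
  have le: "inner a1 z + a0 * t \<le> b" if "h z < t" for z t
    using ab(2) that by (auto simp: S_def a)
  have ge: "inner a1 x + a0 * h x \<ge> b" using ab(3) by (simp add: a)
  have "a0 \<le> 0"
    using le[of x "h x + 1"] ge by (simp add: algebra_simps)
  moreover have "a0 \<noteq> 0"
  proof
    assume "a0 = 0"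
    then have "a1 \<noteq> 0" using ab(1) a by (auto simp: zero_prod_def)
    have "inner a1 (x + a1) \<le> b" using le[of "x + a1" "h (x + a1) + 1"] \<open>a0 = 0\<close> by simp
    then have "inner a1 a1 \<le> 0" using ge \<open>a0 = 0\<close> by (simp add: inner_add_right)
    then show False using \<open>a1 \<noteq> 0\<close> inner_gt_zero_iff[of a1] by linarith
  qed
  ultimately have a0: "a0 < 0" by simp
  define p where "p = (- 1 / a0) *\<^sub>R a1"
  have "h x + inner p (z - x) \<le> h z" for z
  proof (rule ccontr)
    assume nt: "\<not> h x + inner p (z - x) \<le> h z"
    define t where "t = (h z + (h x + inner p (z - x))) / 2"
    have t1: "h z < t" and t2: "t < h x + inner p (z - x)" using nt by (auto simp: t_def)
    have "inner a1 z + a0 * t \<le> inner a1 x + a0 * h x" using le[OF t1] ge by simp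
    then have "a0 * (t - h x) \<le> inner a1 (x - z)" by (simp add: algebra_simps inner_diff_right)
    then have "t - h x \<ge> inner a1 (x - z) / a0" using a0 by (simp add: field_simps)
    moreover have "inner a1 (x - z) / a0 = inner p (z - x)"
      using a0 by (simp add: p_def inner_diff_right field_simps)
    ultimately show False using t2 by simp
  qed
  then show ?thesis by blast
qed

lemma affine_convex:
  fixes y :: "'a::euclidean_space"
  shows "convex_on UNIV (\<lambda>z. a + b * inner z y)"
  unfolding convex_on_def
proof (intro conjI ballI allI impI convex_UNIV)
  fix x z :: 'a and u v :: real
  assume "0 \<le> u" "0 \<le> v" "u + v = 1"
  then have "a = u * a + v * a" by (metis distrib_right mult_1)
  then show "a + b * inner (u *\<^sub>R x + v *\<^sub>R z) y \<le> u * (a + b * inner x y) + v * (a + b * inner z y)"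
    by (simp add: inner_add_left algebra_simps)
qed

lemma hform:
  fixes y z :: "'a::euclidean_space"
  shows "c - l * (norm y)\<^sup>2 + 2 * l * inner z y = c - l * (norm (z - y))\<^sup>2 + l * (norm z)\<^sup>2"
  by (simp add: power2_norm_eq_inner inner_diff_left inner_diff_right inner_commute algebra_simps)

lemma ident:
  fixes p x z :: "'a::euclidean_space"
  assumes "l > 0"
  shows "hx + inner p (z - x) - l * (norm z)\<^sup>2 =
    (hx - inner p x + l * (norm ((1 / (2 * l)) *\<^sub>R p))\<^sup>2) - l * (norm (z - (1 / (2 * l)) *\<^sub>R p))\<^sup>2"
proof -
  define w where "w = (1 / (2 * l)) *\<^sub>R p"
  have e1: "(norm (z - w))\<^sup>2 = (norm z)\<^sup>2 - 2 * inner z w + (norm w)\<^sup>2" for z w :: 'a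
    by (simp add: power2_norm_eq_inner inner_diff_left inner_diff_right inner_commute)
  have e2: "2 * l * inner z w = inner p z" using assms by (simp add: w_def inner_commute)
  show ?thesis unfolding w_def[symmetric] e1
    using e2 by (simp add: inner_diff_right inner_commute algebra_simps)
qed

theorem corollary3p3:
  fixes \<Omega> K :: "'a::euclidean_space set" and l :: real
  assumes "open \<Omega>" and "bounded \<Omega>"
    and "compact K" and "K \<noteq> {}" and "K \<subseteq> \<Omega>"
    and "l > 0"
    and "x \<in> closure \<Omega>"
  shows "let f = (\<lambda>y. (infdist y (K \<union> - \<Omega>))\<^sup>2);
             fm = (\<lambda>y. if y \<in> \<Omega> then f y else (INF z\<in>\<Omega>. f z))
         in medial_axis_map l (K \<union> - \<Omega>) x
            = (1 + l) * (fm x - lower_transform_on l \<Omega> fm x)"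
proof -
  define F where "F = K \<union> - \<Omega>"
  define f where "f = (\<lambda>y. (infdist y F)\<^sup>2)"
  define fm where "fm = (\<lambda>y. if y \<in> \<Omega> then f y else (INF z\<in>\<Omega>. f z))"
  have Fc: "closed F" unfolding F_def using assms(1,3) closed_Compl compact_imp_closed by blast
  have Fne: "F \<noteq> {}" using assms by (auto simp: F_def)
  have f0: "f y = 0 \<longleftrightarrow> y \<in> F" for y
    using in_closed_iff_infdist_zero[OF Fc Fne] by (simp add: f_def)
  have fnn: "f y \<ge> 0" for y by (simp add: f_def)
  obtain k where k: "k \<in> K" using assms by blast
  have "(INF z\<in>\<Omega>. f z) = 0"
  proof (rule antisym)
    show "(INF z\<in>\<Omega>. f z) \<le> 0"
      using k assms f0[of k] by (intro cINF_lower2[where x=k]) (auto simp: F_def intro: bdd_belowI2[where m=0] fnn)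
    show "0 \<le> (INF z\<in>\<Omega>. f z)"
      using k assms by (intro cINF_greatest fnn) auto
  qed
  then have fmf: "fm = f" using f0 by (auto simp: fm_def F_def fun_eq_iff)
  define g where "g = (\<lambda>y. f y + l * (norm y)\<^sup>2)"
  define m where "m = (\<lambda>y. INF z\<in>closure \<Omega>. f z + l * (norm (z - y))\<^sup>2)"
  define Q where "Q = (SUP y\<in>closure \<Omega>. m y - l * (norm (y - x))\<^sup>2)"
  have cne: "closure \<Omega> \<noteq> {}" using assms by auto
  have bddm: "bdd_below ((\<lambda>z. f z + l * (norm (z - y))\<^sup>2) ` closure \<Omega>)" for y
    using assms by (intro bdd_belowI2[where m=0]) (auto intro: add_nonneg_nonneg fnn)
  have mle: "m y \<le> f z + l * (norm (z - y))\<^sup>2" if "z \<in> closure \<Omega>" for y z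
    unfolding m_def using that bddm[of y] by (intro cINF_lower) auto
  have mnn: "m y \<ge> 0" for y
    unfolding m_def using cne assms by (intro cINF_greatest) (auto intro: add_nonneg_nonneg fnn)
  have bddQ: "bdd_above ((\<lambda>y. m y - l * (norm (y - x))\<^sup>2) ` closure \<Omega>)"
  proof (rule bdd_aboveI2[where M="f x"])
    fix y assume "y \<in> closure \<Omega>"
    have "m y \<le> f x + l * (norm (x - y))\<^sup>2" using mle assms(7) by blast
    then show "m y - l * (norm (y - x))\<^sup>2 \<le> f x" by (simp add: norm_minus_commute)
  qed
  have Qge: "Q \<ge> m y - l * (norm (y - x))\<^sup>2" if "y \<in> closure \<Omega>" for y
    unfolding Q_def using bddQ that by (rule cSUP_upper2) auto
  define E where "E = {h x | h. convex_on UNIV h \<and> (\<forall>y. h y \<le> g y)}"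
  have coE: "convex_envelope g x = Sup E" by (simp add: convex_envelope_def E_def)
  have bddE: "bdd_above E" unfolding E_def by (intro bdd_aboveI[where M="g x"]) auto
  have Ene: "E \<noteq> {}"
  proof -
    have "(\<lambda>y. 0::real) x \<in> E" unfolding E_def
      using assms(6) fnn by (intro CollectI exI[of _ "\<lambda>y. 0::real"]) (auto simp: g_def convex_on_const intro!: add_nonneg_nonneg)
    then show ?thesis by blast
  qed
  have under: "m y - l * (norm (z - y))\<^sup>2 \<le> f z" if y: "y \<in> closure \<Omega>" for y z
  proof (cases "z \<in> \<Omega>")
    case True
    then show ?thesis using mle[of z y] closure_subset by force
  next
    case False
    obtain w where w: "w \<in> closure \<Omega>" "w \<in> F" "dist w y \<le> dist z y"
    proof (cases "y \<in> \<Omega>")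
      case True
      have "closed_segment y z \<inter> frontier \<Omega> \<noteq> {}"
        using True False by (intro connected_Int_frontier) auto
      then obtain w where "w \<in> closed_segment y z" "w \<in> frontier \<Omega>" by blast
      moreover then have "w \<in> closure \<Omega>" "w \<notin> \<Omega>"
        using assms(1) by (auto simp: frontier_def interior_open)
      ultimately show ?thesis using that[of w] dist_in_closed_segment[of w y z]
        by (auto simp: F_def dist_commute)
    next
      case False
      then show ?thesis using that[of y] y by (auto simp: F_def)
    qed
    have "m y \<le> f w + l * (norm (w - y))\<^sup>2" using mle w by blast
    also have "\<dots> = l * (dist w y)\<^sup>2" using f0 w by (simp add: dist_norm)
    also have "\<dots> \<le> l * (dist z y)\<^sup>2"
      using w assms(6) by (intro mult_left_mono power_mono) auto
    finally show ?thesis using fnn[of z] by (simp add: dist_norm)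
  qed
  have ge: "Q \<le> Sup E - l * (norm x)\<^sup>2"
    unfolding Q_def
  proof (rule cSUP_least[OF cne])
    fix y assume y: "y \<in> closure \<Omega>"
    define h where "h = (\<lambda>z. m y - l * (norm y)\<^sup>2 + 2 * l * inner z y)"
    have hform: "h z = m y - l * (norm (z - y))\<^sup>2 + l * (norm z)\<^sup>2" for z
      unfolding h_def by (rule hform)
    have "convex_on UNIV h"
      unfolding h_def by (rule affine_convex)
    moreover have "\<forall>z. h z \<le> g z" using under[OF y] by (simp add: hform g_def)
    ultimately have "h x \<in> E" unfolding E_def by blast
    then have "h x \<le> Sup E" using bddE by (rule cSup_upper)
    then show "m y - l * (norm (y - x))\<^sup>2 \<le> Sup E - l * (norm x)\<^sup>2"
      by (simp add: hform norm_minus_commute)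
  qed
  have le: "Sup E \<le> Q + l * (norm x)\<^sup>2"
  proof (rule cSup_least[OF Ene])
    fix e assume "e \<in> E"
    then obtain h where h: "e = h x" "convex_on UNIV h" "\<forall>y. h y \<le> g y" unfolding E_def by blast
    obtain p where p: "\<forall>z. h x + inner p (z - x) \<le> h z" using subgrad[OF h(2)] by blast
    define x0 where "x0 = (1 / (2 * l)) *\<^sub>R p"
    define c where "c = h x - inner p x + l * (norm x0)\<^sup>2"
    have ident: "h x + inner p (z - x) - l * (norm z)\<^sup>2 = c - l * (norm (z - x0))\<^sup>2" for z
      unfolding c_def x0_def using assms(6) by (rule ident)
    have P: "c - l * (norm (z - x0))\<^sup>2 \<le> f z" for z
      using p h(3) ident[of z] by (smt (verit) g_def)
    have hx: "h x - l * (norm x)\<^sup>2 = c - l * (norm (x - x0))\<^sup>2" using ident[of x] by simp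
    show "e \<le> Q + l * (norm x)\<^sup>2"
    proof (cases "x0 \<in> closure \<Omega>")
      case True
      have "c \<le> m x0" unfolding m_def using cne
        by (intro cINF_greatest) (use P in \<open>auto simp: algebra_simps\<close>)
      then have "c - l * (norm (x - x0))\<^sup>2 \<le> Q"
        using Qge[OF True] by (simp add: norm_minus_commute)
      then show ?thesis using hx h(1) by simp
    next
      case False
      then have "x0 \<in> F" using closure_subset by (auto simp: F_def)
      then have "c \<le> 0" using P[of x0] f0[of x0] by simp
      then have "c - l * (norm (x - x0))\<^sup>2 \<le> 0" using assms(6) by (smt (verit) mult_nonneg_nonneg zero_le_power2)
      moreover have "0 \<le> Q" using Qge[OF assms(7)] mnn[of x] by simp
      ultimately show ?thesis using hx h(1) by simp
    qed
  qed
  have "lower_transform l f x = lower_transform_on l \<Omega> f x"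
    using ge le coE
    by (simp add: lower_transform_def lower_transform_on_def moreau_upper_def moreau_lower_def Q_def m_def g_def)
  then have eq: "lower_transform l (\<lambda>y. (infdist y (K \<union> - \<Omega>))\<^sup>2) x =
     lower_transform_on l \<Omega> (\<lambda>y. (infdist y (K \<union> - \<Omega>))\<^sup>2) x" by (simp add: f_def F_def)
  have fmf': "(\<lambda>y. if y \<in> \<Omega> then (infdist y (K \<union> - \<Omega>))\<^sup>2 else (INF z\<in>\<Omega>. (infdist z (K \<union> - \<Omega>))\<^sup>2))
     = (\<lambda>y. (infdist y (K \<union> - \<Omega>))\<^sup>2)" using fmf unfolding fm_def f_def F_def .
  show ?thesis unfolding Let_def fmf' medial_axis_map_def eq using fun_cong[OF fmf', of x] by simp
qed

end
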